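(* (i) Every topological group without nontrivial convergent sequences is TAP. (ii) Every infinite pseudocompact topological group without nontrivial convergent sequences is TAP but not NSS.
   Context: Topological groups are Hausdorff. A topological group is NSS if some open neighborhood of the identity contains no nontrivial subgroup. A subset $A$ of a topological group $G$ is absolutely productive in $G$ if for every injection $a:\mathbb{N}\to A$ and every map $z:\mathbb{N}\to\mathbb{Z}$ the sequence $\left(\prod_{n=0}^{k}a(n)^{z(n)}\right)_{k\in\mathbb{N}}$ converges in $G$; $G$ is TAP if every absolutely productive subset of $G$ is finite. A nontrivial convergent sequence is a convergent sequence that is not eventually constant. *)

theory Defs
  imports "HOL-Analysis.Analysis" "HOL-Algebra.Group"
begin

definition topological_group :: "('a, 'b) monoid_scheme \<Rightarrow> 'a topology \<Rightarrow> bool" where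
  "topological_group G T \<longleftrightarrow>
     group G \<and> topspace T = carrier G \<and> Hausdorff_space T \<and>
     continuous_map (prod_topology T T) T (\<lambda>p. fst p \<otimes>\<^bsub>G\<^esub> snd p) \<and>
     continuous_map T T (\<lambda>x. inv\<^bsub>G\<^esub> x)"

definition NSS :: "('a, 'b) monoid_scheme \<Rightarrow> 'a topology \<Rightarrow> bool" where
  "NSS G T \<longleftrightarrow> (\<exists>U. openin T U \<and> \<one>\<^bsub>G\<^esub> \<in> U \<and>
      (\<forall>H. subgroup H G \<and> H \<subseteq> U \<longrightarrow> H = {\<one>\<^bsub>G\<^esub>}))"

fun partial_prod :: "('a, 'b) monoid_scheme \<Rightarrow> (nat \<Rightarrow> 'a) \<Rightarrow> (nat \<Rightarrow> int) \<Rightarrow> nat \<Rightarrow> 'a" where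
  "partial_prod G a z 0 = a 0 [^]\<^bsub>G\<^esub> z 0"
| "partial_prod G a z (Suc k) = partial_prod G a z k \<otimes>\<^bsub>G\<^esub> (a (Suc k) [^]\<^bsub>G\<^esub> z (Suc k))"

definition absolutely_productive :: "('a, 'b) monoid_scheme \<Rightarrow> 'a topology \<Rightarrow> 'a set \<Rightarrow> bool" where
  "absolutely_productive G T A \<longleftrightarrow> A \<subseteq> carrier G \<and>
     (\<forall>a :: nat \<Rightarrow> 'a. \<forall>z :: nat \<Rightarrow> int. inj a \<and> range a \<subseteq> A \<longrightarrow>
        (\<exists>l. limitin T (partial_prod G a z) l sequentially))"

definition TAP :: "('a, 'b) monoid_scheme \<Rightarrow> 'a topology \<Rightarrow> bool" where
  "TAP G T \<longleftrightarrow> (\<forall>A. absolutely_productive G T A \<longrightarrow> finite A)"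

definition has_nontrivial_convergent_seq :: "'a topology \<Rightarrow> bool" where
  "has_nontrivial_convergent_seq T \<longleftrightarrow>
     (\<exists>s :: nat \<Rightarrow> 'a. \<exists>l. range s \<subseteq> topspace T \<and> limitin T s l sequentially \<and>
        \<not> (\<exists>N. \<forall>n\<ge>N. s n = s N))"

definition pseudocompact :: "'a topology \<Rightarrow> bool" where
  "pseudocompact T \<longleftrightarrow>
     (\<forall>f. continuous_map T euclideanreal f \<longrightarrow> bounded (f ` topspace T))"

end

theory Submission
  imports Defs
begin

definition lprod :: "('a, 'b) monoid_scheme \<Rightarrow> 'a list \<Rightarrow> 'a" where
  "lprod G xs = foldr (\<lambda>a b. a \<otimes>\<^bsub>G\<^esub> b) xs \<one>\<^bsub>G\<^esub>"

lemma lprod_Nil [simp]: "lprod G [] = \<one>\<^bsub>G\<^esub>" by (simp add: lprod_def)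
lemma lprod_Cons [simp]: "lprod G (x # xs) = x \<otimes>\<^bsub>G\<^esub> lprod G xs" by (simp add: lprod_def)

lemma (in monoid) lprod_closed: "set xs \<subseteq> carrier G \<Longrightarrow> lprod G xs \<in> carrier G"
  by (induction xs) auto

lemma (in monoid) lprod_append:
  "set xs \<subseteq> carrier G \<Longrightarrow> set ys \<subseteq> carrier G \<Longrightarrow> lprod G (xs @ ys) = lprod G xs \<otimes> lprod G ys"
  by (induction xs) (auto simp: m_assoc lprod_closed)

lemma split_list_half:
  fixes f :: "'a \<Rightarrow> real"
  assumes "xs \<noteq> []" "\<forall>x. 0 \<le> f x" "0 \<le> a" "a \<le> h" "a + sum_list (map f xs) \<le> 2*h"
  shows "\<exists>A b C. xs = A @ b # C \<and> a + sum_list (map f A) \<le> h \<and> sum_list (map f C) \<le> h"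
  using assms
proof (induction xs arbitrary: a)
  case Nil then show ?case by simp
next
  case (Cons x ys)
  show ?case
  proof (cases "ys = []")
    case True
    then show ?thesis using Cons.prems
      by (intro exI[of _ "[]"] exI[of _ x] exI[of _ "[]"]) simp
  next
    case ne: False
    show ?thesis
    proof (cases "a + f x \<le> h")
      case True
      have "0 \<le> a + f x" using Cons.prems by (simp add: add_nonneg_nonneg)
      moreover have "a + f x + sum_list (map f ys) \<le> 2*h" using Cons.prems by simp
      ultimately obtain A b C where "ys = A @ b # C" "a + f x + sum_list (map f A) \<le> h"
          "sum_list (map f C) \<le> h"
        using Cons.IH[OF ne Cons.prems(2) _ True] by blast
      then show ?thesis
        by (intro exI[of _ "x # A"] exI[of _ b] exI[of _ C]) (simp add: add.assoc)
    next
      case False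
      then show ?thesis using Cons.prems
        by (intro exI[of _ "[]"] exI[of _ x] exI[of _ ys]) simp
    qed
  qed
qed

lemma local_cont:
  assumes "\<And>x. x \<in> topspace X \<Longrightarrow> \<exists>U h. openin X U \<and> x \<in> U \<and> continuous_map X euclideanreal h \<and> (\<forall>y\<in>U. f y = h y)"
  shows "continuous_map X euclideanreal f"
  unfolding continuous_map_atin limitin_canonical_iff
proof
  fix x assume x: "x \<in> topspace X"
  obtain U h where Uh: "openin X U" "x \<in> U" "continuous_map X euclideanreal h" "\<forall>y\<in>U. f y = h y"
    using assms[OF x] by blast
  have "(h \<longlongrightarrow> h x) (atin X x)" using Uh(3) x unfolding continuous_map_atin by simp
  moreover have "\<forall>\<^sub>F y in atin X x. h y = f y" unfolding eventually_atin using Uh by auto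
  ultimately have "(f \<longlongrightarrow> h x) (atin X x)" by (rule Lim_transform_eventually)
  then show "(f \<longlongrightarrow> f x) (atin X x)" using Uh by simp
qed

locale tg = group G for G (structure) +
  fixes T :: "'a topology"
  assumes top: "topspace T = carrier G"
    and haus: "Hausdorff_space T"
    and mcont: "continuous_map (prod_topology T T) T (\<lambda>p. fst p \<otimes> snd p)"
    and icont: "continuous_map T T (\<lambda>x. inv x)"

lemma tgI: "topological_group G T \<Longrightarrow> tg G T"
  unfolding topological_group_def tg_def tg_axioms_def by blast

context tg begin

lemma part1:
  assumes nc: "\<not> has_nontrivial_convergent_seq T"
  shows "TAP G T"
  unfolding TAP_def
proof (intro allI impI, rule ccontr)
  fix A assume ap: "absolutely_productive G T A" and inf: "infinite A"
  obtain a :: "nat \<Rightarrow> 'a" where a: "inj a" "range a \<subseteq> A" using infinite_countable_subset[OF inf] by blast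
  have AG: "A \<subseteq> carrier G" using ap by (simp add: absolutely_productive_def)
  obtain l where l: "limitin T (partial_prod G a (\<lambda>_. 1)) l sequentially"
    using ap a unfolding absolutely_productive_def by blast
  have aG: "a n \<in> carrier G" for n using a AG by auto
  have pG: "partial_prod G a (\<lambda>_. 1) n \<in> carrier G" for n
    by (induction n) (auto simp: aG)
  have ps: "partial_prod G a (\<lambda>_. 1) (Suc n) = partial_prod G a (\<lambda>_. 1) n \<otimes> a (Suc n)" for n
    using aG by simp
  have "\<not> (\<exists>N. \<forall>n\<ge>N. partial_prod G a (\<lambda>_. 1) n = partial_prod G a (\<lambda>_. 1) N)"
  proof
    assume "\<exists>N. \<forall>n\<ge>N. partial_prod G a (\<lambda>_. 1) n = partial_prod G a (\<lambda>_. 1) N"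
    then obtain N where N: "\<forall>n\<ge>N. partial_prod G a (\<lambda>_. 1) n = partial_prod G a (\<lambda>_. 1) N" by blast
    have one: "a (Suc n) = \<one>" if "n \<ge> N" for n
    proof -
      have "partial_prod G a (\<lambda>_. 1) n \<otimes> a (Suc n) = partial_prod G a (\<lambda>_. 1) n"
        using N that ps[of n] by (metis le_SucI)
      then show ?thesis using pG aG l_cancel_one by blast
    qed
    have "a (Suc N) = a (Suc (Suc N))" using one[of N] one[of "Suc N"] by simp
    then show False using a(1) by (metis inj_eq n_not_Suc_n)
  qed
  then have "has_nontrivial_convergent_seq T"
    unfolding has_nontrivial_convergent_seq_def using l pG top by blast
  then show False using nc by simp
qed

lemma lmult_cont: "a \<in> carrier G \<Longrightarrow> continuous_map T T (\<lambda>x. a \<otimes> x)"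
proof -
  assume a: "a \<in> carrier G"
  have "continuous_map T (prod_topology T T) (\<lambda>x. (a, x))"
    using a top by (intro continuous_map_pairedI) auto
  from continuous_map_compose[OF this mcont] show ?thesis by (simp add: o_def)
qed

lemma open_transl: "openin T U \<Longrightarrow> b \<in> carrier G \<Longrightarrow> openin T {x \<in> carrier G. b \<otimes> x \<in> U}"
  using openin_continuous_map_preimage[OF lmult_cont] top by metis

lemma open_inv: "openin T U \<Longrightarrow> openin T {x \<in> carrier G. inv x \<in> U}"
  using openin_continuous_map_preimage[OF icont] top by metis

lemma nbhd3:
  assumes W: "openin T W" "\<one> \<in> W"
  shows "\<exists>V. openin T V \<and> \<one> \<in> V \<and> (\<forall>x\<in>V. inv x \<in> V) \<and> (\<forall>x\<in>V. \<forall>y\<in>V. x \<otimes> y \<in> W)"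
proof -
  define P where "P = {p \<in> topspace (prod_topology T T). fst p \<otimes> snd p \<in> W}"
  have oP: "openin (prod_topology T T) P"
    unfolding P_def by (rule openin_continuous_map_preimage[OF mcont W(1)])
  have "(\<one>, \<one>) \<in> P"
    unfolding P_def using W(2) top by simp
  then obtain A B where AB: "openin T A" "openin T B" "\<one> \<in> A" "\<one> \<in> B" "A \<times> B \<subseteq> P"
    using oP unfolding openin_prod_topology_alt by meson
  define V0 where "V0 = A \<inter> B"
  have V0: "openin T V0" "\<one> \<in> V0" using AB(1-4) unfolding V0_def by (auto intro: openin_Int)
  have V0G: "V0 \<subseteq> carrier G" using openin_subset[OF V0(1)] top by simp
  define V where "V = V0 \<inter> {x \<in> carrier G. inv x \<in> V0}"
  have "openin T V" unfolding V_def by (rule openin_Int[OF V0(1) open_inv[OF V0(1)]])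
  moreover have "\<one> \<in> V" using V0 by (simp add: V_def)
  moreover have "\<forall>x\<in>V. inv x \<in> V"
  proof
    fix x assume "x \<in> V"
    then have "x \<in> V0" "x \<in> carrier G" "inv x \<in> V0" by (auto simp: V_def)
    then show "inv x \<in> V" by (simp add: V_def)
  qed
  moreover have "\<forall>x\<in>V. \<forall>y\<in>V. x \<otimes> y \<in> W"
  proof (intro ballI)
    fix x y assume "x \<in> V" "y \<in> V"
    then have "(x, y) \<in> A \<times> B" by (simp add: V_def V0_def)
    then have "(x, y) \<in> P" using AB(5) by blast
    then show "x \<otimes> y \<in> W" by (simp add: P_def)
  qed
  ultimately show ?thesis by blast
qed

lemma nbhd3':
  assumes W: "openin T W" "\<one> \<in> W"
  shows "\<exists>V. openin T V \<and> \<one> \<in> V \<and> (\<forall>x\<in>V. inv x \<in> V) \<and> (\<forall>x\<in>V. \<forall>y\<in>V. \<forall>z\<in>V. x \<otimes> y \<otimes> z \<in> W)"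
proof -
  obtain V1 where V1: "openin T V1" "\<one> \<in> V1" "\<forall>x\<in>V1. \<forall>y\<in>V1. x \<otimes> y \<in> W"
    using nbhd3[OF W] by blast
  obtain V where V: "openin T V" "\<one> \<in> V" "\<forall>x\<in>V. inv x \<in> V" "\<forall>x\<in>V. \<forall>y\<in>V. x \<otimes> y \<in> V1"
    using nbhd3[OF V1(1,2)] by blast
  have VG: "V \<subseteq> carrier G" using openin_subset[OF V(1)] top by simp
  have "x \<otimes> y \<otimes> z \<in> W" if "x \<in> V" "y \<in> V" "z \<in> V" for x y z
  proof -
    have "z \<otimes> \<one> \<in> V1" using V(2,4) that(3) by blast
    then have z1: "z \<in> V1" using that(3) VG by auto
    have "x \<otimes> y \<in> V1" using V(4) that(1,2) by blast
    then show ?thesis using V1(3) z1 by blast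
  qed
  then show ?thesis using V by blast
qed


lemma nbhd_seq:
  assumes W: "openin T W" "\<one> \<in> W"
  shows "\<exists>V. \<forall>n. openin T (V n) \<and> \<one> \<in> V n \<and> (\<forall>x\<in>V n. inv x \<in> V n) \<and> V n \<subseteq> W
        \<and> V (Suc n) \<subseteq> V n \<and> (\<forall>x\<in>V (Suc n). \<forall>y\<in>V (Suc n). \<forall>z\<in>V (Suc n). x \<otimes> y \<otimes> z \<in> V n)"
proof -
  define Q where "Q = (\<lambda>W V. openin T V \<and> \<one> \<in> V \<and> (\<forall>x\<in>V. inv x \<in> V) \<and>
                     (\<forall>x\<in>V. \<forall>y\<in>V. \<forall>z\<in>V. x \<otimes> y \<otimes> z \<in> W))"
  have ex: "Q W' (SOME V. Q W' V)" if "openin T W'" "\<one> \<in> W'" for W'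
  proof -
    have "\<exists>V. Q W' V" using nbhd3'[OF that] unfolding Q_def .
    then show ?thesis by (rule someI_ex)
  qed
  define V where "V = rec_nat (SOME V. Q W V) (\<lambda>n Vn. SOME V'. Q Vn V')"
  have V0: "V 0 = (SOME V. Q W V)" and VS: "V (Suc n) = (SOME V'. Q (V n) V')" for n
    by (simp_all add: V_def)
  have base: "openin T (V n) \<and> \<one> \<in> V n" for n
  proof (induction n)
    case 0 then show ?case using ex[OF W] V0 by (simp add: Q_def)
  next
    case (Suc n) then show ?case using ex[of "V n"] VS[of n] by (simp add: Q_def)
  qed
  have Q0: "Q W (V 0)" using ex[OF W] V0 by simp
  have QS: "Q (V n) (V (Suc n))" for n using ex[of "V n"] base[of n] VS[of n] by simp
  have sub: "V' \<subseteq> W'" if "Q W' V'" for W' V'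
  proof
    fix x assume x: "x \<in> V'"
    have oV: "openin T V'" using that by (simp add: Q_def)
    have xG: "x \<in> carrier G" using x openin_subset[OF oV] top by auto
    have 1: "\<one> \<in> V'" using that by (simp add: Q_def)
    have "\<forall>x\<in>V'. \<forall>y\<in>V'. \<forall>z\<in>V'. x \<otimes> y \<otimes> z \<in> W'" using that by (simp add: Q_def)
    then have "\<one> \<otimes> \<one> \<otimes> x \<in> W'" using 1 x by blast
    then show "x \<in> W'" using xG by simp
  qed
  have dec: "V (Suc n) \<subseteq> V n" for n using sub[OF QS] .
  have VW: "V n \<subseteq> W" for n
  proof (induction n)
    case 0 then show ?case using sub[OF Q0] .
  next
    case (Suc n) then show ?case using dec[of n] by blast
  qed
  have sym: "\<forall>x\<in>V n. inv x \<in> V n" for n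
  proof (cases n)
    case 0 then show ?thesis using Q0 by (simp add: Q_def)
  next
    case (Suc m) then show ?thesis using QS[of m] by (simp add: Q_def)
  qed
  have tri: "\<forall>x\<in>V (Suc n). \<forall>y\<in>V (Suc n). \<forall>z\<in>V (Suc n). x \<otimes> y \<otimes> z \<in> V n" for n
    using QS[of n] by (simp add: Q_def)
  show ?thesis
  proof (intro exI[of _ V] allI conjI)
    fix n
    show "openin T (V n)" using base[of n] by simp
    show "\<one> \<in> V n" using base[of n] by simp
    show "\<forall>x\<in>V n. inv x \<in> V n" by (rule sym)
    show "V n \<subseteq> W" by (rule VW)
    show "V (Suc n) \<subseteq> V n" by (rule dec)
    show "\<forall>x\<in>V (Suc n). \<forall>y\<in>V (Suc n). \<forall>z\<in>V (Suc n). x \<otimes> y \<otimes> z \<in> V n" by (rule tri)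
  qed
qed

end

locale tgseq = tg +
  fixes V :: "nat \<Rightarrow> 'a set"
  assumes Vopen: "openin T (V n)" and V1: "\<one> \<in> V n" and Vsym: "x \<in> V n \<Longrightarrow> inv x \<in> V n"
    and Vdec: "V (Suc n) \<subseteq> V n"
    and Vtri: "x \<in> V (Suc n) \<Longrightarrow> y \<in> V (Suc n) \<Longrightarrow> z \<in> V (Suc n) \<Longrightarrow> x \<otimes> y \<otimes> z \<in> V n"
begin

lemma VG: "V n \<subseteq> carrier G" using openin_subset[OF Vopen] top by simp

lemma Vanti: "m \<le> n \<Longrightarrow> V n \<subseteq> V m"
  using lift_Suc_antimono_le[of V, OF Vdec] by blast

definition N :: "'a \<Rightarrow> real" where
  "N y = Inf (insert 1 {(1/2)^n | n. y \<in> V n})"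

lemma Nbdd: "bdd_below (insert 1 {(1/2::real)^n | n. y \<in> V n})"
  by (rule bdd_belowI[of _ 0]) auto

lemma Nnn: "0 \<le> N y"
  unfolding N_def by (rule cInf_greatest) auto

lemma Nle1: "N y \<le> 1"
  unfolding N_def by (rule cInf_lower[OF _ Nbdd]) simp

lemma Nle: "y \<in> V n \<Longrightarrow> N y \<le> (1/2)^n"
  unfolding N_def by (rule cInf_lower[OF _ Nbdd]) blast

lemma Nlt: assumes "N y < (1/2)^n" shows "y \<in> V (Suc n)"
proof -
  have bb: "bdd_below {(1/2::real)^n | n. y \<in> V n}" by (rule bdd_belowI[of _ 0]) auto
  have "\<exists>x\<in>insert 1 {(1/2::real)^n | n. y \<in> V n}. x < (1/2)^n"
    using assms unfolding N_def by (subst cInf_less_iff[symmetric]) (auto simp: Nbdd bb)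
  then obtain m where m: "y \<in> V m" "(1/2::real)^m < (1/2)^n"
    using power_le_one[of "1/2::real" n] by auto
  then have "n < m" by (simp add: power_strict_decreasing_iff)
  then show ?thesis using Vanti[of "Suc n" m] m(1) by auto
qed

lemma Nsym: assumes "y \<in> carrier G" shows "N (inv y) = N y"
proof -
  have "inv y \<in> V n \<longleftrightarrow> y \<in> V n" for n
    using Vsym[of "inv y" n] Vsym[of y n] assms by auto
  then show ?thesis unfolding N_def by simp
qed

lemma Nbound:
  assumes s: "0 \<le> s" and V: "\<And>n. s < (1/2)^n \<Longrightarrow> y \<in> V n"
  shows "N y \<le> 2 * s"
proof (rule ccontr)
  assume "\<not> N y \<le> 2 * s"
  then have lt: "2 * s < N y" by simp
  then have "0 < N y" using s by simp
  then have ex: "\<exists>n. (1/2::real)^n < N y" using real_arch_pow_inv[of "N y" "1/2"] by simp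
  define k where "k = (LEAST n. (1/2::real)^n < N y)"
  have k: "(1/2::real)^k < N y" unfolding k_def using LeastI_ex[OF ex] .
  have "k \<noteq> 0"
  proof
    assume "k = 0" then show False using k Nle1[of y] by simp
  qed
  then obtain j where j: "k = Suc j" by (cases k) auto
  have "\<not> (1/2::real)^j < N y" using not_less_Least[of j "\<lambda>n. (1/2::real)^n < N y"] j k_def by simp
  then have "N y \<le> 2 * (1/2)^k" using j by simp
  then have "s < (1/2)^k" using lt by simp
  then have "y \<in> V k" by (rule V)
  then have "N y \<le> (1/2)^k" by (rule Nle)
  then show False using k by simp
qed

lemma N_one: "N \<one> \<le> 0"
  using Nbound[of 0 \<one>] V1 by simp

lemma Nthree:
  assumes "x \<in> carrier G" "y \<in> carrier G" "z \<in> carrier G" "N x \<le> s" "N y \<le> s" "N z \<le> s"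
  shows "N (x \<otimes> y \<otimes> z) \<le> 2 * s"
proof (rule Nbound)
  show "0 \<le> s" using Nnn[of x] assms by simp
  fix n assume n: "s < (1/2)^n"
  have "x \<in> V (Suc n)" "y \<in> V (Suc n)" "z \<in> V (Suc n)"
    using assms n by (auto intro!: Nlt)
  then show "x \<otimes> y \<otimes> z \<in> V n" by (rule Vtri)
qed

lemma kelley: "set xs \<subseteq> carrier G \<Longrightarrow> N (lprod G xs) \<le> 2 * sum_list (map N xs)"
proof (induction xs rule: length_induct)
  case (1 xs)
  define s where "s = sum_list (map N xs)"
  have s0: "0 \<le> s" unfolding s_def by (rule sum_list_nonneg) (auto simp: Nnn)
  show ?case
  proof (cases "xs = []")
    case True then show ?thesis using N_one by simp
  next
    case False
    obtain A b C where ABC: "xs = A @ b # C" "0 + sum_list (map N A) \<le> s/2" "sum_list (map N C) \<le> s/2"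
      using split_list_half[OF False, of N 0 "s/2"] s0 Nnn unfolding s_def by auto
    have G: "set A \<subseteq> carrier G" "b \<in> carrier G" "set C \<subseteq> carrier G" using "1.prems" ABC(1) by auto
    have "N (lprod G A) \<le> 2 * sum_list (map N A)"
      using "1.IH" G(1) ABC(1) by simp
    then have a: "N (lprod G A) \<le> s" using ABC(2) by simp
    have "N (lprod G C) \<le> 2 * sum_list (map N C)"
      using "1.IH" G(3) ABC(1) by simp
    then have c: "N (lprod G C) \<le> s" using ABC(3) by simp
    have sA: "0 \<le> sum_list (map N A)" "0 \<le> sum_list (map N C)"
      by (rule sum_list_nonneg, auto simp: Nnn)+
    have "s = sum_list (map N A) + N b + sum_list (map N C)" unfolding s_def ABC(1) by simp
    then have b: "N b \<le> s" using sA by simp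
    have "lprod G xs = lprod G A \<otimes> b \<otimes> lprod G C"
      using G by (simp add: ABC(1) lprod_append lprod_closed m_assoc)
    then show ?thesis using Nthree[OF lprod_closed[OF G(1)] G(2) lprod_closed[OF G(3)] a b c]
      unfolding s_def by simp
  qed
qed

definition Gs :: "'a \<Rightarrow> real set" where
  "Gs x = {sum_list (map N xs) | xs. set xs \<subseteq> carrier G \<and> lprod G xs = x}"

definition gg :: "'a \<Rightarrow> real" where "gg x = Inf (Gs x)"

lemma Gs_bdd: "bdd_below (Gs x)"
  unfolding Gs_def by (rule bdd_belowI[of _ 0]) (auto intro!: sum_list_nonneg simp: Nnn)

lemma N_in_Gs: "x \<in> carrier G \<Longrightarrow> N x \<in> Gs x"
  unfolding Gs_def by (rule CollectI, rule exI[of _ "[x]"]) simp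

lemma gg_le_N: "x \<in> carrier G \<Longrightarrow> gg x \<le> N x"
  unfolding gg_def by (rule cInf_lower[OF N_in_Gs Gs_bdd])

lemma gg_nn: "x \<in> carrier G \<Longrightarrow> 0 \<le> gg x"
  unfolding gg_def using N_in_Gs
  by (intro cInf_greatest) (auto simp: Gs_def intro!: sum_list_nonneg simp: Nnn)

lemma N_le_gg: assumes "x \<in> carrier G" shows "N x \<le> 2 * gg x"
proof -
  have "N x / 2 \<le> gg x" unfolding gg_def
  proof (rule cInf_greatest)
    show "Gs x \<noteq> {}" using N_in_Gs[OF assms] by blast
    fix t assume "t \<in> Gs x"
    then obtain xs where "set xs \<subseteq> carrier G" "lprod G xs = x" "t = sum_list (map N xs)"
      unfolding Gs_def by blast
    then show "N x / 2 \<le> t" using kelley[of xs] by simp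
  qed
  then show ?thesis by simp
qed

lemma gg_one: "gg \<one> = 0"
proof -
  have "0 \<in> Gs \<one>" unfolding Gs_def by (rule CollectI, rule exI[of _ "[]"]) simp
  then have "gg \<one> \<le> 0" unfolding gg_def by (rule cInf_lower[OF _ Gs_bdd])
  then show ?thesis using gg_nn[of \<one>] by simp
qed

lemma gg_mult: assumes x: "x \<in> carrier G" and u: "u \<in> carrier G" shows "gg (x \<otimes> u) \<le> gg x + N u"
proof -
  have "gg (x \<otimes> u) - N u \<le> gg x" unfolding gg_def[of x]
  proof (rule cInf_greatest)
    show "Gs x \<noteq> {}" using N_in_Gs[OF x] by blast
    fix t assume "t \<in> Gs x"
    then obtain xs where xs: "set xs \<subseteq> carrier G" "lprod G xs = x" "t = sum_list (map N xs)"
      unfolding Gs_def by blast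
    have "t + N u \<in> Gs (x \<otimes> u)" unfolding Gs_def
      using xs u by (intro CollectI exI[of _ "xs @ [u]"]) (simp add: lprod_append)
    then have "gg (x \<otimes> u) \<le> t + N u" unfolding gg_def by (rule cInf_lower[OF _ Gs_bdd])
    then show "gg (x \<otimes> u) - N u \<le> t" by simp
  qed
  then show ?thesis by simp
qed

lemma gg_close:
  assumes x: "x \<in> carrier G" and y: "y \<in> carrier G" and q: "inv x \<otimes> y \<in> V n"
  shows "\<bar>gg y - gg x\<bar> \<le> (1/2)^n"
proof -
  have qG: "inv x \<otimes> y \<in> carrier G" using x y by simp
  have "gg (x \<otimes> (inv x \<otimes> y)) \<le> gg x + N (inv x \<otimes> y)" by (rule gg_mult[OF x qG])
  moreover have "x \<otimes> (inv x \<otimes> y) = y" using x y by (simp add: m_assoc[symmetric])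
  ultimately have 1: "gg y \<le> gg x + (1/2)^n" using Nle[OF q] by simp
  have q': "inv y \<otimes> x \<in> V n" using Vsym[OF q] x y by (simp add: inv_mult_group)
  have q'G: "inv y \<otimes> x \<in> carrier G" using x y by simp
  have "gg (y \<otimes> (inv y \<otimes> x)) \<le> gg y + N (inv y \<otimes> x)" by (rule gg_mult[OF y q'G])
  moreover have "y \<otimes> (inv y \<otimes> x) = x" using x y by (simp add: m_assoc[symmetric])
  ultimately have 2: "gg x \<le> gg y + (1/2)^n" using Nle[OF q'] by simp
  show ?thesis using 1 2 by simp
qed

lemma gg_cont: "continuous_map T euclideanreal gg"
  unfolding continuous_map_atin limitin_canonical_iff
proof
  fix x assume x: "x \<in> topspace T"
  then have xG: "x \<in> carrier G" using top by simp
  show "(gg \<longlongrightarrow> gg x) (atin T x)"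
    unfolding tendsto_iff
  proof (intro allI impI)
    fix e :: real assume e: "0 < e"
    obtain n where n: "(1/2::real)^n < e" using real_arch_pow_inv[OF e, of "1/2"] by auto
    define U where "U = {y \<in> carrier G. inv x \<otimes> y \<in> V n}"
    have "openin T U" unfolding U_def using open_transl[OF Vopen] xG by simp
    moreover have "x \<in> U" using xG V1 by (simp add: U_def)
    moreover have "\<forall>y\<in>U - {x}. dist (gg y) (gg x) < e"
      using gg_close[OF xG] n by (force simp: U_def dist_real_def)
    ultimately show "\<forall>\<^sub>F y in atin T x. dist (gg y) (gg x) < e"
      unfolding eventually_atin by blast
  qed
qed

lemma gg_small: "y \<in> carrier G \<Longrightarrow> gg y < 1/2 \<Longrightarrow> y \<in> V 0"
  using N_le_gg[of y] Nlt[of y 0] Vdec[of 0] by auto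

end

context tg begin

lemma bump0:
  assumes W: "openin T W" "\<one> \<in> W"
  shows "\<exists>g. continuous_map T euclideanreal g \<and> g \<one> = 0 \<and> (\<forall>y\<in>carrier G. g y < 1 \<longrightarrow> y \<in> W)"
proof -
  obtain V where V: "\<And>n. openin T (V n)" "\<And>n. \<one> \<in> V n" "\<And>n x. x \<in> V n \<Longrightarrow> inv x \<in> V n"
    "\<And>n. V n \<subseteq> W" "\<And>n. V (Suc n) \<subseteq> V n"
    "\<And>n x y z. x\<in>V (Suc n) \<Longrightarrow> y\<in>V (Suc n) \<Longrightarrow> z\<in>V (Suc n) \<Longrightarrow> x \<otimes> y \<otimes> z \<in> V n"
    using nbhd_seq[OF W] by metis
  interpret S: tgseq G T V
    by (unfold_locales) (use V in auto)
  show ?thesis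
  proof (intro exI[of _ "\<lambda>y. 2 * S.gg y"] conjI ballI impI)
    show "continuous_map T euclideanreal (\<lambda>y. 2 * S.gg y)"
      by (rule continuous_map_real_mult_left[OF S.gg_cont])
    show "2 * S.gg \<one> = 0" by (simp add: S.gg_one)
    fix y assume "y \<in> carrier G" "2 * S.gg y < 1"
    then have "y \<in> V 0" using S.gg_small by simp
    then show "y \<in> W" using V(4) by blast
  qed
qed


lemma not_discrete:
  assumes inf: "infinite (carrier G)" and pc: "pseudocompact T"
  shows "\<not> openin T {\<one>}"
proof
  assume o1: "openin T {\<one>}"
  have osing: "openin T {x}" if x: "x \<in> carrier G" for x
  proof -
    have "{y \<in> carrier G. inv x \<otimes> y \<in> {\<one>}} = {x}"
      using x inv_solve_left'[of \<one> x] by auto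
    then show ?thesis using open_transl[OF o1, of "inv x"] x by simp
  qed
  have allopen: "openin T S" if S: "S \<subseteq> carrier G" for S
  proof (subst openin_subopen, intro ballI)
    fix x assume "x \<in> S"
    then show "\<exists>T'. openin T T' \<and> x \<in> T' \<and> T' \<subseteq> S" using osing S by blast
  qed
  obtain s :: "nat \<Rightarrow> 'a" where s: "inj s" "range s \<subseteq> carrier G"
    using infinite_countable_subset[OF inf] by blast
  define f where "f y = (if y \<in> range s then real (inv_into UNIV s y) else 0)" for y
  have "continuous_map T euclideanreal f"
    unfolding continuous_map_def
  proof (intro conjI allI impI)
    show "f \<in> topspace T \<rightarrow> topspace euclideanreal" by simp
    fix U :: "real set"
    show "openin T {x \<in> topspace T. f x \<in> U}" by (rule allopen) (auto simp: top)
  qed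
  then have "bounded (f ` topspace T)" using pc by (simp add: pseudocompact_def)
  then obtain B where B: "\<forall>x\<in>f ` topspace T. \<bar>x\<bar> \<le> B" by (auto simp: bounded_real)
  obtain n :: nat where n: "B < real n" using reals_Archimedean2 by blast
  have "f (s n) = real n" using s by (simp add: f_def)
  moreover have "s n \<in> topspace T" using s top by auto
  ultimately have "\<bar>real n\<bar> \<le> B" using B by force
  then show False using n by simp
qed

lemma part2:
  assumes inf: "infinite (carrier G)" and pc: "pseudocompact T"
    and nc: "\<not> has_nontrivial_convergent_seq T" and nss: "NSS G T"
  shows False
proof -
  obtain U where U: "openin T U" "\<one> \<in> U" "\<And>H. subgroup H G \<Longrightarrow> H \<subseteq> U \<Longrightarrow> H = {\<one>}"
    using nss unfolding NSS_def by blast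
  obtain V where V: "\<And>n. openin T (V n)" "\<And>n. \<one> \<in> V n" "\<And>n x. x \<in> V n \<Longrightarrow> inv x \<in> V n"
    "\<And>n. V n \<subseteq> U" "\<And>n. V (Suc n) \<subseteq> V n"
    "\<And>n x y z. x\<in>V (Suc n) \<Longrightarrow> y\<in>V (Suc n) \<Longrightarrow> z\<in>V (Suc n) \<Longrightarrow> x \<otimes> y \<otimes> z \<in> V n"
    using nbhd_seq[OF U(1,2)] by metis
  interpret Q: tgseq G T V
    by (unfold_locales) (use V in auto)
  define H where "H = (\<Inter>n. V n)"
  have HG: "H \<subseteq> carrier G" using Q.VG by (auto simp: H_def)
  have "subgroup H G"
  proof (rule subgroup.intro)
    show "H \<subseteq> carrier G" by (rule HG)
    show "\<one> \<in> H" using V(2) by (simp add: H_def)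
    fix x y assume xy: "x \<in> H" "y \<in> H"
    show "x \<otimes> y \<in> H" unfolding H_def
    proof
      fix n
      have "x \<otimes> y \<otimes> \<one> \<in> V n" using xy V(2)[of "Suc n"] by (intro V(6)) (auto simp: H_def)
      moreover have "x \<in> carrier G" "y \<in> carrier G" using xy HG by auto
      ultimately show "x \<otimes> y \<in> V n" by simp
    qed
  next
    fix x assume "x \<in> H" then show "inv x \<in> H" using V(3) by (auto simp: H_def)
  qed
  moreover have "H \<subseteq> U" using V(4)[of 0] by (auto simp: H_def)
  ultimately have H1: "H = {\<one>}" by (rule U(3))
  have nd: "\<not> openin T {\<one>}" by (rule not_discrete[OF inf pc])
  have ex1: "\<exists>x. x \<in> V n \<and> x \<noteq> \<one>" for n
  proof (rule ccontr)
    assume a: "\<not> (\<exists>x. x \<in> V n \<and> x \<noteq> \<one>)"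
    have "V n = {\<one>}"
    proof
      show "V n \<subseteq> {\<one>}" using a by blast
      show "{\<one>} \<subseteq> V n" using V(2)[of n] by simp
    qed
    then show False using nd V(1)[of n] by simp
  qed
  have "\<forall>n. \<exists>x. x \<in> V n \<and> x \<noteq> \<one>" using ex1 by blast
  from choice[OF this] obtain x where "\<forall>n. x n \<in> V n \<and> x n \<noteq> \<one>" by blast
  then have x: "\<And>n. x n \<in> V n" "\<And>n. x n \<noteq> \<one>" by auto
  have xG: "x n \<in> carrier G" for n using x(1)[of n] Q.VG[of n] by blast
  have "\<not> limitin T x \<one> sequentially"
  proof
    assume lim: "limitin T x \<one> sequentially"
    have rx: "range x \<subseteq> topspace T" using xG top by auto
    have "\<exists>N. \<forall>n\<ge>N. x n = x N"
    proof (rule ccontr)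
      assume "\<not> (\<exists>N. \<forall>n\<ge>N. x n = x N)"
      then have "has_nontrivial_convergent_seq T" unfolding has_nontrivial_convergent_seq_def
        using rx lim by blast
      with nc show False by simp
    qed
    then obtain N where N: "\<forall>n\<ge>N. x n = x N" by blast
    have "limitin T x (x N) sequentially"
      unfolding limitin_sequentially
    proof (intro conjI allI impI)
      show "x N \<in> topspace T" using xG top by simp
      fix W assume "openin T W \<and> x N \<in> W"
      then have "x N \<in> W" by blast
      have "\<forall>n. N \<le> n \<longrightarrow> x n \<in> W"
      proof (intro allI impI)
        fix n assume "N \<le> n"
        then have "x n = x N" using N by blast
        then show "x n \<in> W" using \<open>x N \<in> W\<close> by (simp only:)
      qed
      then show "\<exists>M. \<forall>n. M \<le> n \<longrightarrow> x n \<in> W" by blast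
    qed
    have "\<not> trivial_limit (sequentially :: nat filter)" by simp
    then have "x N = \<one>" using limitin_Hausdorff_unique[OF \<open>limitin T x (x N) sequentially\<close> lim _ haus] by blast
    then show False using x(2) by simp
  qed
  then have "\<not> (\<forall>U. openin T U \<and> \<one> \<in> U \<longrightarrow> (\<exists>N. \<forall>n. N \<le> n \<longrightarrow> x n \<in> U))"
    unfolding limitin_sequentially using top by simp
  then obtain W where W: "openin T W" "\<one> \<in> W" "\<not> (\<exists>N. \<forall>n. N \<le> n \<longrightarrow> x n \<in> W)"
    by blast
  define I where "I = {n. x n \<notin> W}"
  have Iinf: "infinite I" unfolding infinite_nat_iff_unbounded_le I_def using W(3) by blast
  obtain g0 where g0: "continuous_map T euclideanreal g0" "g0 \<one> = 0" "\<forall>y\<in>carrier G. g0 y < 1 \<longrightarrow> y \<in> W"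
    using bump0[OF W(1,2)] by blast
  define S where "S n = {y \<in> carrier G. y \<in> V n \<and> 1/2 < g0 y}" for n
  have og: "openin T {y \<in> topspace T. g0 y \<in> {1/2<..}}"
    by (rule openin_continuous_map_preimage[OF g0(1)]) simp
  have Sopen: "openin T (S n)" for n
  proof -
    have "S n = V n \<inter> {y \<in> topspace T. g0 y \<in> {1/2<..}}" using Q.VG top by (auto simp: S_def)
    then show ?thesis using openin_Int[OF V(1) og] by simp
  qed
  have xS: "x n \<in> S n" if "n \<in> I" for n
  proof -
    have "\<not> g0 (x n) < 1" using g0(3) xG[of n] that by (auto simp: I_def)
    then show ?thesis using xG[of n] x(1)[of n] by (simp add: S_def)
  qed
  have exh: "\<exists>h. continuous_map T euclideanreal h \<and> h \<one> = 0 \<and> (\<forall>y\<in>carrier G. h y < 1 \<longrightarrow> x n \<otimes> y \<in> S n)"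
    if "n \<in> I" for n
  proof -
    have "openin T {y \<in> carrier G. x n \<otimes> y \<in> S n}" by (rule open_transl[OF Sopen xG])
    moreover have "\<one> \<in> {y \<in> carrier G. x n \<otimes> y \<in> S n}" using xS[OF that] xG[of n] by simp
    ultimately have "\<exists>g. continuous_map T euclideanreal g \<and> g \<one> = 0 \<and> (\<forall>y\<in>carrier G. g y < 1 \<longrightarrow> y \<in> {y \<in> carrier G. x n \<otimes> y \<in> S n})"
      by (rule bump0)
    then show ?thesis by auto
  qed
  have "\<forall>n\<in>I. \<exists>h. continuous_map T euclideanreal h \<and> h \<one> = 0 \<and> (\<forall>y\<in>carrier G. h y < 1 \<longrightarrow> x n \<otimes> y \<in> S n)"
    using exh by blast
  from bchoice[OF this] obtain h where "\<forall>n\<in>I. continuous_map T euclideanreal (h n) \<and> h n \<one> = 0 \<and> (\<forall>y\<in>carrier G. h n y < 1 \<longrightarrow> x n \<otimes> y \<in> S n)"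
    by blast
  then have h: "\<And>n. n \<in> I \<Longrightarrow> continuous_map T euclideanreal (h n)"
    "\<And>n. n \<in> I \<Longrightarrow> h n \<one> = 0" "\<And>n y. n \<in> I \<Longrightarrow> y \<in> carrier G \<Longrightarrow> h n y < 1 \<Longrightarrow> x n \<otimes> y \<in> S n"
    by auto
  define \<phi> where "\<phi> n y = max 0 (1 - h n (inv (x n) \<otimes> y))" for n y
  have \<phi>cont: "continuous_map T euclideanreal (\<phi> n)" if "n \<in> I" for n
  proof -
    have "continuous_map T euclideanreal (h n \<circ> (\<lambda>y. inv (x n) \<otimes> y))"
      by (rule continuous_map_compose[OF lmult_cont h(1)[OF that]]) (simp add: xG)
    then have "continuous_map T euclideanreal (\<lambda>y. h n (inv (x n) \<otimes> y))" by (simp add: o_def)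
    then show ?thesis unfolding \<phi>_def[abs_def]
      by (intro continuous_map_real_max continuous_map_diff) auto
  qed
  have \<phi>x: "\<phi> n (x n) = 1" if "n \<in> I" for n
    using h(2)[OF that] xG[of n] by (simp add: \<phi>_def)
  have \<phi>0: "\<phi> n y = 0" if "n \<in> I" "y \<in> carrier G" "y \<notin> S n" for n y
  proof -
    have "\<not> h n (inv (x n) \<otimes> y) < 1"
    proof
      assume "h n (inv (x n) \<otimes> y) < 1"
      then have "x n \<otimes> (inv (x n) \<otimes> y) \<in> S n" using h(3)[OF that(1)] that(2) xG[of n] by simp
      then show False using that xG[of n] by (simp add: m_assoc[symmetric])
    qed
    then show ?thesis by (simp add: \<phi>_def)
  qed
  define a where "a n y = (if n \<in> I then real n * \<phi> n y else 0)" for n y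
  have acont: "continuous_map T euclideanreal (\<lambda>y. a n y)" for n
    by (cases "n \<in> I") (simp_all add: a_def continuous_map_real_mult_left \<phi>cont)
  have ann: "0 \<le> a n y" for n y by (simp add: a_def \<phi>_def)
  have loc: "\<exists>Nb M. openin T Nb \<and> p \<in> Nb \<and> (\<forall>y\<in>Nb. \<forall>n\<ge>M. a n y = 0)" if p: "p \<in> carrier G" for p
  proof (cases "p = \<one>")
    case True
    have "openin T {y \<in> topspace T. g0 y \<in> {..<1/2}}"
      by (rule openin_continuous_map_preimage[OF g0(1)]) simp
    moreover have "p \<in> {y \<in> topspace T. g0 y \<in> {..<1/2}}" using True g0(2) top by simp
    moreover have "\<forall>y\<in>{y \<in> topspace T. g0 y \<in> {..<1/2}}. \<forall>n\<ge>0. a n y = 0"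
    proof (intro ballI allI impI)
      fix y n assume y: "y \<in> {y \<in> topspace T. g0 y \<in> {..<1/2}}"
      then have "y \<notin> S n" "y \<in> carrier G" using top by (auto simp: S_def)
      then show "a n y = 0" using \<phi>0 by (simp add: a_def)
    qed
    ultimately show ?thesis by blast
  next
    case False
    then have "p \<notin> H" using H1 by simp
    then obtain m where m: "p \<notin> V m" by (auto simp: H_def)
    define Nb where "Nb = {y \<in> carrier G. inv p \<otimes> y \<in> V (Suc m)}"
    have "openin T Nb" unfolding Nb_def by (rule open_transl[OF V(1)]) (simp add: p)
    moreover have "p \<in> Nb" using p V(2) by (simp add: Nb_def)
    moreover have "\<forall>y\<in>Nb. \<forall>n\<ge>Suc m. a n y = 0"
    proof (intro ballI allI impI)
      fix y n assume y: "y \<in> Nb" and n: "Suc m \<le> n"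
      have yG: "y \<in> carrier G" using y by (simp add: Nb_def)
      have "y \<notin> V n"
      proof
        assume "y \<in> V n"
        then have y1: "y \<in> V (Suc m)" using Q.Vanti[OF n] by blast
        have q: "inv p \<otimes> y \<in> V (Suc m)" using y by (simp add: Nb_def)
        have q': "inv (inv p \<otimes> y) \<in> V (Suc m)" by (rule V(3)[OF q])
        have "y \<otimes> inv (inv p \<otimes> y) \<otimes> \<one> \<in> V m" using y1 q' V(2)[of "Suc m"] by (intro V(6))
        moreover have "y \<otimes> inv (inv p \<otimes> y) \<otimes> \<one> = p" using yG p
          by (simp add: inv_mult_group m_assoc[symmetric])
        ultimately show False using m by simp
      qed
      then have "y \<notin> S n" by (simp add: S_def)
      then show "a n y = 0" using \<phi>0 yG by (simp add: a_def)
    qed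
    ultimately show ?thesis by blast
  qed
  define F where "F y = (\<Sum>n. a n y)" for y
  have Fsum: "F y = (\<Sum>n<M'. a n y)" if "y \<in> Nb" "\<forall>y\<in>Nb. \<forall>n\<ge>M. a n y = 0" "M \<le> M'" for y Nb M M'
    unfolding F_def
  proof (rule suminf_finite)
    show "finite {..<M'}" by simp
    fix n assume "n \<notin> {..<M'}"
    then have "M \<le> n" using that(3) by simp
    then show "a n y = 0" using that(1,2) by blast
  qed
  have Fcont: "continuous_map T euclideanreal F"
  proof (rule local_cont)
    fix p assume "p \<in> topspace T"
    then have pG: "p \<in> carrier G" using top by simp
    obtain Nb M where NM: "openin T Nb" "p \<in> Nb" "\<forall>y\<in>Nb. \<forall>n\<ge>M. a n y = 0"
      using loc[OF pG] by blast
    have "continuous_map T euclideanreal (\<lambda>y. \<Sum>n<M. a n y)"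
      by (rule continuous_map_sum) (simp, rule acont)
    moreover have "\<forall>y\<in>Nb. F y = (\<Sum>n<M. a n y)"
    proof
      fix y assume "y \<in> Nb"
      show "F y = (\<Sum>n<M. a n y)" by (rule Fsum[OF \<open>y \<in> Nb\<close> NM(3) order_refl])
    qed
    ultimately show "\<exists>U h. openin T U \<and> p \<in> U \<and> continuous_map T euclideanreal h \<and> (\<forall>y\<in>U. F y = h y)"
      using NM(1,2) by (intro exI[of _ Nb] exI[of _ "\<lambda>y. \<Sum>n<M. a n y"]) simp
  qed
  then have "bounded (F ` topspace T)" using pc by (simp add: pseudocompact_def)
  then obtain B where B: "\<forall>z\<in>F ` topspace T. \<bar>z\<bar> \<le> B" by (auto simp: bounded_real)
  obtain n where n: "n \<in> I" "nat \<lceil>B\<rceil> < n" using Iinf unfolding infinite_nat_iff_unbounded by blast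
  have nB: "B < real n" using n(2) by linarith
  obtain Nb M where NM: "openin T Nb" "x n \<in> Nb" "\<forall>y\<in>Nb. \<forall>k\<ge>M. a k y = 0"
    using loc[OF xG[of n]] by blast
  have "F (x n) = (\<Sum>k<max M (Suc n). a k (x n))" by (rule Fsum[OF NM(2) NM(3)]) simp
  also have "\<dots> \<ge> a n (x n)" by (rule member_le_sum) (auto simp: ann)
  finally have "real n \<le> F (x n)" using \<phi>x[OF n(1)] by (simp add: a_def n(1))
  moreover have "\<bar>F (x n)\<bar> \<le> B" using B xG top by auto
  ultimately show False using nB by simp
qed

end
theorem proposition4p10:
  fixes G :: "('a, 'b) monoid_scheme" and T :: "'a topology"
  assumes "topological_group G T"
  shows "(\<not> has_nontrivial_convergent_seq T \<longrightarrow> TAP G T)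
       \<and> (infinite (carrier G) \<and> pseudocompact T \<and> \<not> has_nontrivial_convergent_seq T
            \<longrightarrow> TAP G T \<and> \<not> NSS G T)"
proof -
  interpret tg G T by (rule tgI[OF assms])
  show ?thesis using part1 part2 by blast
qed

end
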